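(* For every $n\ge1$ there is a bijection from $\mathcal{S}_n(0011,0021)$ onto the set of Dyck paths of semilength $n$ which sends an ascent sequence with exactly $k$ zeros to a Dyck path with exactly $k$ returns (equivalently, $k$ components). In particular, for all $n\ge1$ and $k\ge1$, the number of sequences in $\mathcal{S}_n(0011,0021)$ having exactly $k$ entries equal to $0$ equals the number of Dyck paths of semilength $n$ with exactly $k$ returns, and $S_n(0011,0021)=C_n$.
   Context: An ascent sequence of length $n$ is a sequence $x_1\cdots x_n$ of non-negative integers with $x_1=0$ and $x_i\le \mathrm{asc}(x_1\cdots x_{i-1})+1$ for $1<i\le n$, where $\mathrm{asc}$ counts indices $j$ with $x_j<x_{j+1}$. A sequence contains a pattern $\tau$ if some subsequence is order-isomorphic to $\tau$ (equal letters to equal letters); otherwise it avoids $\tau$; $\mathcal{S}_n(T)$ is the set of ascent sequences of length $n$ avoiding all patterns in $T$. A Dyck path of semilength $n$ is a lattice path from $(0,0)$ to $(2n,0)$ with steps $U=(1,1)$ and $D=(1,-1)$ never going below the $x$-axis. A return is a non-initial vertex on the $x$-axis; the returns split a nonempty Dyck path into components (each a nonempty Dyck path touching the axis only at its endpoints), so the number of components equals the number of returns. $C_n=\frac1{n+1}\binom{2n}n$. *)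

theory Defs
  imports Main "HOL-Library.Sublist"
begin

text \<open>Ascent sequences are lists of naturals; Dyck paths are lists of booleans
  (True = up step U, False = down step D).\<close>

definition asc :: "nat list \<Rightarrow> nat" where
  "asc xs = card {j. Suc j < length xs \<and> xs ! j < xs ! Suc j}"

definition ascent_seq :: "nat list \<Rightarrow> bool" where
  "ascent_seq xs \<longleftrightarrow> xs \<noteq> [] \<and> xs ! 0 = 0 \<and>
     (\<forall>i. 0 < i \<and> i < length xs \<longrightarrow> xs ! i \<le> asc (take i xs) + 1)"

definition order_iso :: "nat list \<Rightarrow> nat list \<Rightarrow> bool" where
  "order_iso ys ts \<longleftrightarrow> length ys = length ts \<and>
     (\<forall>i<length ys. \<forall>j<length ys.
        (ys ! i < ys ! j \<longleftrightarrow> ts ! i < ts ! j) \<and> (ys ! i = ys ! j \<longleftrightarrow> ts ! i = ts ! j))"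

definition contains :: "nat list \<Rightarrow> nat list \<Rightarrow> bool" where
  "contains xs \<tau> \<longleftrightarrow> (\<exists>ys. subseq ys xs \<and> order_iso ys \<tau>)"

definition avoids_all :: "nat list \<Rightarrow> nat list set \<Rightarrow> bool" where
  "avoids_all xs T \<longleftrightarrow> (\<forall>\<tau>\<in>T. \<not> contains xs \<tau>)"

definition S :: "nat \<Rightarrow> nat list set \<Rightarrow> nat list set" where
  "S n T = {xs. length xs = n \<and> ascent_seq xs \<and> avoids_all xs T}"

definition height :: "bool list \<Rightarrow> int" where
  "height p = int (count_list p True) - int (count_list p False)"

definition dyck :: "nat \<Rightarrow> bool list set" where
  "dyck n = {p. length p = 2 * n \<and> height p = 0 \<and> (\<forall>i\<le>length p. height (take i p) \<ge> 0)}"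

definition returns :: "bool list \<Rightarrow> nat" where
  "returns p = card {i. 1 \<le> i \<and> i \<le> length p \<and> height (take i p) = 0}"

definition catalan :: "nat \<Rightarrow> nat" where
  "catalan n = ((2 * n) choose n) div (n + 1)"

end

theory Submission
  imports Defs
begin


fun D :: "nat \<Rightarrow> nat \<Rightarrow> nat" where
  "D 0 k = (if k = 0 then 1 else 0)"
| "D (Suc n) k = (case k of 0 \<Rightarrow> 0 | Suc k' \<Rightarrow> (\<Sum>i<Suc n. D n (k'+i)))"

lemma D_big: "n < k \<Longrightarrow> D n k = 0"
proof (induction n arbitrary: k)
  case 0 then show ?case by simp
next
  case (Suc n)
  then obtain k' where k: "k = Suc k'" by (cases k) auto
  have "\<forall>i<Suc n. D n (k'+i) = 0" using Suc k by auto
  then show ?case using k by simp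
qed

lemma D_Suc0 [simp]: "D (Suc n) 0 = 0" by simp

lemma D_sum_big: "n < N \<Longrightarrow> (\<Sum>i<N. D n (k+i)) = D (Suc n) (Suc k)"
proof -
  assume "n < N"
  then obtain d where N: "N = Suc n + d" by (metis less_imp_Suc_add add_Suc)
  have "(\<Sum>i<Suc n + d. D n (k+i)) = D (Suc n) (Suc k)"
    by (induction d) (simp_all add: D_big)
  then show ?thesis using N by simp
qed

lemma D_two: "D (Suc n) (Suc k) = D n k + D (Suc n) (Suc (Suc k))"
proof -
  have "D (Suc n) (Suc k) = (\<Sum>i<Suc n. D n (k+i))" by simp
  also have "\<dots> = D n k + (\<Sum>i<n. D n (Suc k+i))"
    by (subst sum.lessThan_Suc_shift) simp
  also have "(\<Sum>i<n. D n (Suc k+i)) = (\<Sum>i<Suc n. D n (Suc k+i))"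
    by (simp add: D_big)
  finally show ?thesis by simp
qed

lemma D_nn: "D n n = 1"
proof (induction n)
  case 0 then show ?case by simp
next
  case (Suc n)
  have "D (Suc n) (Suc n) = D n n + D (Suc n) (Suc (Suc n))" by (rule D_two)
  then show ?case using Suc D_big[of "Suc n" "Suc (Suc n)"] by simp
qed

declare D.simps(2)[simp del]

lemma D_closed: "int (D (Suc (k+a)) (Suc k)) =
   int ((k+2*a) choose a) - (if a > 0 then int ((k+2*a) choose (a-1)) else 0)"
proof (induction a arbitrary: k)
  case 0 then show ?case using D_nn[of "Suc k"] by simp
next
  case (Suc a)
  note IHa = Suc.IH
  show ?case
  proof (induction k)
    case 0
    have "D (Suc (0+Suc a)) (Suc 0) = D (Suc a) 0 + D (Suc (Suc a)) (Suc (Suc 0))"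
      using D_two[of "Suc a" 0] by simp
    also have "\<dots> = D (Suc (1 + a)) (Suc 1)" by simp
    finally have e: "D (Suc (0+Suc a)) (Suc 0) = D (Suc (1 + a)) (Suc 1)" .
    have "int (D (Suc (1 + a)) (Suc 1)) = int ((1+2*a) choose a) - (if a > 0 then int ((1+2*a) choose (a-1)) else 0)"
      by (rule IHa)
    moreover have "(1+2*a) choose a = (1+2*a) choose (Suc a)"
      using binomial_symmetric[of a "1+2*a"] by simp
    moreover have "(0 + 2 * Suc a) choose Suc a = ((1+2*a) choose a) + ((1+2*a) choose Suc a)"
      by simp
    moreover have "a > 0 \<Longrightarrow> (0 + 2 * Suc a) choose a = ((1+2*a) choose (a-1)) + ((1+2*a) choose a)"
      by (cases a) simp_all
    moreover have "a = 0 \<Longrightarrow> (0 + 2 * Suc a) choose a = 1" by simp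
    ultimately show ?case using e by (cases "a > 0") simp_all
  next
    case (Suc k)
    have "D (Suc (Suc k + Suc a)) (Suc (Suc k)) = D (Suc (k + Suc a)) (Suc k) + D (Suc (Suc k+Suc a)) (Suc (Suc (Suc k)))"
      using D_two[of "Suc k + Suc a" "Suc k"] by simp
    moreover have "D (Suc (Suc k+Suc a)) (Suc (Suc (Suc k))) = D (Suc (Suc (Suc k) + a)) (Suc (Suc (Suc k)))" by simp
    moreover note IHa[of "Suc (Suc k)"] Suc.IH
    moreover have "(Suc k + 2 * Suc a) choose Suc a = ((k + 2 * Suc a) choose Suc a) + ((k + 2 * Suc a) choose a)"
      by simp
    moreover have "a > 0 \<Longrightarrow> (Suc k + 2 * Suc a) choose a = ((k + 2 * Suc a) choose a) + ((k + 2 * Suc a) choose (a-1))"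
      by (cases a) simp_all
    moreover have "a = 0 \<Longrightarrow> (Suc k + 2 * Suc a) choose a = 1" by simp
    moreover have "a = 0 \<Longrightarrow> (k + 2 * Suc a) choose a = 1" by simp
    moreover have "Suc (Suc k) + 2*a = k + 2 * Suc a" by simp
    ultimately show ?case by (cases "a > 0") (simp_all add: algebra_simps)
  qed
qed

lemma D_catalan: "D (Suc n) 1 = catalan n"
proof -
  have c: "int (D (Suc (0+n)) (Suc 0)) = int ((2*n) choose n) - (if n > 0 then int ((2*n) choose (n-1)) else 0)"
    using D_closed[of 0 n] by simp
  show ?thesis
  proof (cases n)
    case 0 then show ?thesis using D_nn[of "Suc 0"] by (simp add: catalan_def)
  next
    case (Suc m)
    have a1: "(Suc m + 1) * ((2*Suc m) choose m) = (2*Suc m) * ((2*Suc m - 1) choose m)"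
      using binomial_absorb_comp[of "2*Suc m" m] by (simp add: algebra_simps)
    have a2: "(Suc m) * ((2*Suc m) choose Suc m) = (2*Suc m) * ((2*Suc m - 1) choose m)"
      using binomial_absorption[of m "2*Suc m"] by simp
    have eq: "(Suc m + 1) * ((2*Suc m) choose m) = Suc m * ((2*Suc m) choose Suc m)"
      using a1 a2 by simp
    define X where "X = (2*Suc m) choose Suc m"
    define Y where "Y = (2*Suc m) choose m"
    have eq': "(m + 2) * Y = (m+1) * X" using eq unfolding X_def Y_def by simp
    have e: "(int m + 2) * int Y = (int m + 1) * int X"
    proof -
      have "int ((m + 2) * Y) = int ((m+1) * X)" using eq' by simp
      then show ?thesis by (simp add: algebra_simps)
    qed
    have "int (D (Suc n) 1) = int X - int Y" using c Suc by (simp add: X_def Y_def)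
    moreover have "(int X - int Y) * (int m + 2) = int X"
    proof -
      have "(int X - int Y) * (int m + 2) = int X * (int m + 2) - (int m + 2) * int Y" by (simp add: algebra_simps)
      also have "\<dots> = int X * (int m + 2) - (int m + 1) * int X" using e by simp
      also have "\<dots> = int X" by (simp add: algebra_simps)
      finally show ?thesis .
    qed
    ultimately have h: "int (D (Suc n) 1) * (int m + 2) = int X" by (simp only:)
    have "int (D (Suc n) 1 * (m+2)) = int X" using h by (simp add: algebra_simps)
    then have "D (Suc n) 1 * (m+2) = X" by (simp only: of_nat_eq_iff)
    then have dx: "D (Suc n) 1 * (m+2) = X" .
    have nz: "(m+2::nat) \<noteq> 0" by simp
    have "X div (m+2) = D (Suc n) 1" using nonzero_mult_div_cancel_right[OF nz, of "D (Suc n) 1"] dx by (simp only:)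
    then show ?thesis using Suc by (simp add: catalan_def X_def)
  qed
qed



definition bal :: "bool list \<Rightarrow> bool" where
  "bal p \<longleftrightarrow> height p = 0 \<and> (\<forall>i\<le>length p. height (take i p) \<ge> 0)"

lemma dyck_iff: "p \<in> dyck n \<longleftrightarrow> length p = 2*n \<and> bal p"
  unfolding dyck_def bal_def by auto

lemma height_Nil [simp]: "height [] = 0" by (simp add: height_def)
lemma height_Cons [simp]: "height (b # p) = height p + (if b then 1 else -1)"
  by (cases b) (simp_all add: height_def)
lemma height_append [simp]: "height (p @ q) = height p + height q"
  by (simp add: height_def)

lemma len_count: "length p = count_list p True + count_list p False"
  by (induction p) auto

lemma bal_len: "bal p \<Longrightarrow> length p = 2 * count_list p True"
  using len_count[of p] unfolding bal_def height_def by auto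

lemma height_take_Suc: "i < length p \<Longrightarrow> height (take (Suc i) p) = height (take i p) + (if p!i then 1 else -1)"
  by (simp add: take_Suc_conv_app_nth)

definition fr :: "bool list \<Rightarrow> nat" where
  "fr p = (LEAST i. 0 < i \<and> height (take i p) = 0)"
definition inner :: "bool list \<Rightarrow> bool list" where
  "inner p = take (fr p - 2) (tl p)"
definition rest :: "bool list \<Rightarrow> bool list" where
  "rest p = drop (fr p) p"

lemma bal_Nil [simp]: "bal []" by (simp add: bal_def)

lemma take_build:
  "take i (True # q @ False # r) =
    (if i = 0 then [] else if i \<le> Suc (length q) then True # take (i - 1) q
     else True # q @ False # take (i - length q - 2) r)"
  by (cases i) (auto simp: take_Cons')

lemma height_build_low:
  assumes "bal q" "0 < i" "i \<le> Suc (length q)"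
  shows "height (take i (True # q @ False # r)) \<ge> 1"
proof -
  have "height (take (i-1) q) \<ge> 0" using assms unfolding bal_def by auto
  then show ?thesis using assms by (simp add: take_build)
qed

lemma height_build_high:
  assumes "bal q" "i \<ge> length q + 2"
  shows "height (take i (True # q @ False # r)) = height (take (i - length q - 2) r)"
  using assms unfolding bal_def by (simp add: take_build)

lemma fr_build:
  assumes "bal q"
  shows "fr (True # q @ False # r) = length q + 2"
  unfolding fr_def
proof (rule Least_equality)
  show "0 < length q + 2 \<and> height (take (length q + 2) (True # q @ False # r)) = 0"
    using height_build_high[OF assms, of "length q + 2" r] by simp
next
  fix y assume y: "0 < y \<and> height (take y (True # q @ False # r)) = 0"
  show "length q + 2 \<le> y"
  proof (rule ccontr)
    assume "\<not> length q + 2 \<le> y"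
    then have "y \<le> Suc (length q)" by simp
    then show False using height_build_low[OF assms, of y r] y by simp
  qed
qed

lemma inner_build: "bal q \<Longrightarrow> inner (True # q @ False # r) = q"
  by (simp add: inner_def fr_build)
lemma rest_build: "bal q \<Longrightarrow> rest (True # q @ False # r) = r"
  by (simp add: rest_def fr_build)

lemma bal_build:
  assumes "bal q" "bal r"
  shows "bal (True # q @ False # r)"
  unfolding bal_def
proof (intro conjI allI impI)
  show "height (True # q @ False # r) = 0" using assms by (simp add: bal_def)
next
  fix i assume i: "i \<le> length (True # q @ False # r)"
  show "0 \<le> height (take i (True # q @ False # r))"
  proof (cases "i = 0")
    case True then show ?thesis by simp
  next
    case False
    show ?thesis
    proof (cases "i \<le> Suc (length q)")
      case True then show ?thesis using height_build_low[OF assms(1), of i r] False by simp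
    next
      case False
      then have "height (take i (True # q @ False # r)) = height (take (i - length q - 2) r)"
        using height_build_high[OF assms(1)] by simp
      then show ?thesis using assms(2) unfolding bal_def
        by (metis nat_le_linear take_all)
    qed
  qed
qed

lemma returns_build:
  assumes "bal q"
  shows "returns (True # q @ False # r) = Suc (returns r)"
proof -
  let ?p = "True # q @ False # r"
  let ?A = "{i. 1 \<le> i \<and> i \<le> length r \<and> height (take i r) = 0}"
  have "{i. 1 \<le> i \<and> i \<le> length ?p \<and> height (take i ?p) = 0} =
        insert (length q + 2) ((\<lambda>i. i + (length q + 2)) ` ?A)"
  proof (intro set_eqI iffI)
    fix i assume "i \<in> {i. 1 \<le> i \<and> i \<le> length ?p \<and> height (take i ?p) = 0}"
    then have i: "1 \<le> i" "i \<le> length ?p" "height (take i ?p) = 0" by auto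
    have "\<not> i \<le> Suc (length q)" using height_build_low[OF assms, of i r] i by auto
    then have h: "height (take (i - length q - 2) r) = 0" using height_build_high[OF assms, of i r] i by simp
    show "i \<in> insert (length q + 2) ((\<lambda>i. i + (length q + 2)) ` ?A)"
    proof (cases "i = length q + 2")
      case False
      then have "i - (length q + 2) \<in> ?A" using h i \<open>\<not> i \<le> Suc (length q)\<close> by auto
      then show ?thesis using \<open>\<not> i \<le> Suc (length q)\<close> by (auto intro!: image_eqI[where x="i - (length q + 2)"])
    qed simp
  next
    fix i assume "i \<in> insert (length q + 2) ((\<lambda>i. i + (length q + 2)) ` ?A)"
    then show "i \<in> {i. 1 \<le> i \<and> i \<le> length ?p \<and> height (take i ?p) = 0}"
    proof
      assume "i = length q + 2"
      then show ?thesis using height_build_high[OF assms, of i r] by simp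
    next
      assume "i \<in> (\<lambda>i. i + (length q + 2)) ` ?A"
      then obtain j where j: "j \<in> ?A" "i = j + (length q + 2)" by auto
      then show ?thesis using height_build_high[OF assms, of i r] by simp
    qed
  qed
  moreover have "finite ?A" by simp
  moreover have "length q + 2 \<notin> (\<lambda>i. i + (length q + 2)) ` ?A" by auto
  ultimately show ?thesis unfolding returns_def
    by (simp add: card_image inj_on_def)
qed

lemma decomp_ex:
  assumes "bal p" "p \<noteq> []"
  shows "\<exists>q r. p = True # q @ False # r \<and> bal q \<and> bal r"
proof -
  define f where "f = fr p"
  have ex: "0 < length p \<and> height (take (length p) p) = 0" using assms unfolding bal_def by simp
  have f1: "0 < f \<and> height (take f p) = 0" unfolding f_def fr_def by (rule LeastI, rule ex)
  have f2: "f \<le> length p" unfolding f_def fr_def by (rule Least_le, rule ex)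
  have f3: "\<And>i. 0 < i \<Longrightarrow> i < f \<Longrightarrow> height (take i p) > 0"
  proof -
    fix i assume i: "0 < i" "i < f"
    have "height (take i p) \<noteq> 0" using not_less_Least[of i "\<lambda>i. 0 < i \<and> height (take i p) = 0"] i
      unfolding f_def fr_def by auto
    moreover have "height (take i p) \<ge> 0" using assms i f2 unfolding bal_def by auto
    ultimately show "height (take i p) > 0" by simp
  qed
  obtain a p' where pp: "p = a # p'" using assms(2) by (cases p) auto
  have p0: "p ! 0 = True"
  proof (rule ccontr)
    assume "p ! 0 \<noteq> True"
    then have "height (take 1 p) = -1" using pp by simp
    moreover have "1 \<le> length p \<longrightarrow> height (take 1 p) \<ge> 0" using assms(1) unfolding bal_def by blast
    then have "height (take 1 p) \<ge> 0" using pp by simp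
    ultimately show False by simp
  qed
  have h1: "height (take 1 p) = 1" using pp p0 by simp
  have "f \<noteq> 1" using f1 h1 by auto
  then have fge2: "f \<ge> 2" using f1 by linarith
  have tS: "take f p = take (f-1) p @ [p!(f-1)]"
    using take_Suc_conv_app_nth[of "f-1" p] fge2 f2 by simp
  have hf: "height (take f p) = height (take (f-1) p) + (if p!(f-1) then 1 else -1)"
    using tS by simp
  have pos: "height (take (f-1) p) > 0" using f3[of "f-1"] fge2 by simp
  have pf: "p ! (f-1) = False" using hf pos f1 by (auto split: if_splits)
  have hf1: "height (take (f-1) p) = 1" using hf pos f1 pf by simp
  define q where "q = take (f-2) (tl p)"
  define r where "r = drop f p"
  have fm: "f - 1 = Suc (f-2)" using fge2 by simp
  have t1: "take (f-1) p = True # q" using pp p0 fm q_def by simp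
  have tf: "take f p = True # q @ [False]" using tS t1 pf by simp
  have "p = take f p @ drop f p" by simp
  then have pe: "p = True # q @ False # r" using tf r_def by simp
  have "length (take f p) = f" using f2 by simp
  then have lq: "length q = f - 2" using tf by simp
  have bq: "bal q" unfolding bal_def
  proof (intro conjI allI impI)
    show "height q = 0" using hf1 t1 by simp
  next
    fix i assume i: "i \<le> length q"
    have "take (Suc i) p = True # take i q" using pe i by simp
    moreover have "height (take (Suc i) p) > 0" using f3[of "Suc i"] i lq fge2 by simp
    ultimately show "height (take i q) \<ge> 0" by simp
  qed
  have br: "bal r" unfolding bal_def
  proof (intro conjI allI impI)
    have "height p = height (take f p) + height r" unfolding r_def by (metis append_take_drop_id height_append)
    then show "height r = 0" using assms f1 unfolding bal_def by simp
  next
    fix i assume i: "i \<le> length r"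
    have "take (f + i) p = take f p @ take i r" using r_def by (simp add: take_add)
    then have "height (take (f+i) p) = height (take i r)" using f1 by simp
    moreover have "f + i \<le> length p" using i r_def f2 by simp
    ultimately show "height (take i r) \<ge> 0" using assms unfolding bal_def by metis
  qed
  show ?thesis using pe bq br by blast
qed



lemma dyck_finite: "finite (dyck n)"
proof -
  have "dyck n \<subseteq> {xs. set xs \<subseteq> (UNIV::bool set) \<and> length xs = 2*n}" unfolding dyck_def by auto
  moreover have "finite {xs. set xs \<subseteq> (UNIV::bool set) \<and> length xs = 2*n}"
    by (rule finite_lists_length_eq) simp
  ultimately show ?thesis by (rule finite_subset)
qed

lemma returns_Nil [simp]: "returns [] = 0"
proof -
  have e: "{i::nat. 1 \<le> i \<and> i \<le> length ([]::bool list) \<and> height (take i []) = 0} = {}" by auto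
  show ?thesis unfolding returns_def e by (rule card.empty)
qed

lemma returns_le: "returns p \<le> length p"
proof -
  have "{i. 1 \<le> i \<and> i \<le> length p \<and> height (take i p) = 0} \<subseteq> {1..length p}" by auto
  then show ?thesis unfolding returns_def by (metis card_atLeastAtMost card_mono diff_Suc_1 finite_atLeastAtMost)
qed

lemma decomp:
  assumes "bal p" "p \<noteq> []"
  shows "p = True # inner p @ False # rest p \<and> bal (inner p) \<and> bal (rest p)"
proof -
  obtain q r where "p = True # q @ False # r" "bal q" "bal r" using decomp_ex[OF assms] by blast
  then show ?thesis using inner_build rest_build by simp
qed

lemma build:
  assumes "bal q" "bal r"
  shows "bal (True # q @ False # r) \<and> inner (True # q @ False # r) = q \<and> rest (True # q @ False # r) = r
    \<and> returns (True # q @ False # r) = Suc (returns r) \<and> length (True # q @ False # r) = length q + length r + 2"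
  using assms bal_build inner_build rest_build returns_build by simp

lemma even_bal: "bal p \<Longrightarrow> \<exists>m. length p = 2*m"
  using bal_len by blast

lemma dyck_rec:
  "card {p\<in>dyck (Suc n). returns p = Suc k} =
   card {p\<in>dyck n. returns p = k} + card {p\<in>dyck (Suc n). returns p = Suc (Suc k)}"
proof -
  define A where "A = {p\<in>dyck (Suc n). returns p = Suc k}"
  define A1 where "A1 = {p\<in>A. inner p = []}"
  define A2 where "A2 = {p\<in>A. inner p \<noteq> []}"
  define B where "B = {p\<in>dyck (Suc n). returns p = Suc (Suc k)}"
  define C where "C = {p\<in>dyck n. returns p = k}"
  have fA: "finite A" unfolding A_def using dyck_finite by simp
  have AU: "A = A1 \<union> A2" "A1 \<inter> A2 = {}" unfolding A1_def A2_def by auto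
  have cA: "card A = card A1 + card A2"
    using AU fA by (simp add: card_Un_disjoint)
  have A1im: "A1 = (\<lambda>r. True # [] @ False # r) ` C"
  proof (intro set_eqI iffI)
    fix p assume "p \<in> A1"
    then have p: "length p = 2 * Suc n" "bal p" "returns p = Suc k" "inner p = []"
      unfolding A1_def A_def dyck_iff by auto
    then have pn: "p \<noteq> []" by auto
    obtain q r where qr: "p = True # q @ False # r" "bal q" "bal r" using decomp_ex[OF p(2) pn] by blast
    have bb: "inner p = q" "rest p = r" "returns p = Suc (returns r)" "length p = length q + length r + 2"
      using build[OF qr(2) qr(3)] qr(1) by simp_all
    have q0: "q = []" using bb p by simp
    have "r \<in> C" unfolding C_def dyck_iff using p bb qr q0 by auto
    then show "p \<in> (\<lambda>r. True # [] @ False # r) ` C" using qr(1) q0 by blast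
  next
    fix p assume "p \<in> (\<lambda>r. True # [] @ False # r) ` C"
    then obtain r where r: "r \<in> C" "p = True # [] @ False # r" by blast
    then have rr: "bal r" "length r = 2*n" "returns r = k" unfolding C_def dyck_iff by auto
    show "p \<in> A1" using build[OF bal_Nil rr(1)] rr r(2) unfolding A1_def A_def dyck_iff by simp
  qed
  have cA1: "card A1 = card C" unfolding A1im by (rule card_image) (simp add: inj_on_def)
  define g where "g p = True # (True # inner p @ False # inner (rest p)) @ False # rest (rest p)" for p
  define h where "h p = True # inner (inner p) @ False # (True # rest (inner p) @ False # rest p)" for p
  have Bdec: "\<exists>q1 q2 r. p = True # q1 @ False # (True # q2 @ False # r) \<and> bal q1 \<and> bal q2 \<and> bal r
     \<and> returns r = k \<and> length q1 + length q2 + length r + 4 = 2 * Suc n" if "p \<in> B" for p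
  proof -
    have p: "length p = 2 * Suc n" "bal p" "returns p = Suc (Suc k)"
      using that unfolding B_def dyck_iff by auto
    then have pn: "p \<noteq> []" by auto
    obtain q1 p2 where d: "p = True # q1 @ False # p2" "bal q1" "bal p2" using decomp_ex[OF p(2) pn] by blast
    have "returns p2 = Suc k" "length p = length q1 + length p2 + 2"
      using build[OF d(2) d(3)] d(1) p(3) by simp_all
    then have rn: "p2 \<noteq> []" by auto
    obtain q2 r where d2: "p2 = True # q2 @ False # r" "bal q2" "bal r" using decomp_ex[OF d(3) rn] by blast
    have "returns r = k" "length p2 = length q2 + length r + 2"
      using build[OF d2(2) d2(3)] d2(1) \<open>returns p2 = Suc k\<close> by simp_all
    then show ?thesis using d d2 p \<open>length p = length q1 + length p2 + 2\<close> by auto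
  qed
  have A2dec: "\<exists>q1 q2 r. p = True # (True # q1 @ False # q2) @ False # r \<and> bal q1 \<and> bal q2 \<and> bal r
     \<and> returns r = k \<and> length q1 + length q2 + length r + 4 = 2 * Suc n" if "p \<in> A2" for p
  proof -
    have p: "length p = 2 * Suc n" "bal p" "returns p = Suc k" "inner p \<noteq> []"
      using that unfolding A2_def A_def dyck_iff by auto
    then have pn: "p \<noteq> []" by auto
    obtain q r where d: "p = True # q @ False # r" "bal q" "bal r" using decomp_ex[OF p(2) pn] by blast
    have "inner p = q" "returns r = k" "length p = length q + length r + 2"
      using build[OF d(2) d(3)] d(1) p(3) by simp_all
    then have qn: "q \<noteq> []" using p by auto
    obtain q1 q2 where d2: "q = True # q1 @ False # q2" "bal q1" "bal q2" using decomp_ex[OF d(2) qn] by blast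
    have "length q = length q1 + length q2 + 2"
      using build[OF d2(2) d2(3)] d2(1) by simp_all
    then show ?thesis using d d2 p \<open>returns r = k\<close> \<open>length p = length q + length r + 2\<close> by auto
  qed
  have gB: "g (True # q1 @ False # (True # q2 @ False # r)) = True # (True # q1 @ False # q2) @ False # r"
    if "bal q1" "bal q2" "bal r" for q1 q2 r
  proof -
    have b: "bal (True # q2 @ False # r)" using build[OF that(2,3)] by simp
    show ?thesis unfolding g_def using build[OF that(1) b] build[OF that(2,3)] by simp
  qed
  have hA: "h (True # (True # q1 @ False # q2) @ False # r) = True # q1 @ False # (True # q2 @ False # r)"
    if "bal q1" "bal q2" "bal r" for q1 q2 r
  proof -
    have b: "bal (True # q1 @ False # q2)" using build[OF that(1,2)] by simp
    show ?thesis unfolding h_def using build[OF b that(3)] build[OF that(1,2)] by simp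
  qed
  have inB: "True # q1 @ False # (True # q2 @ False # r) \<in> B"
    if "bal q1" "bal q2" "bal r" "returns r = k" "length q1 + length q2 + length r + 4 = 2 * Suc n" for q1 q2 r
  proof -
    have b: "bal (True # q2 @ False # r)" using build[OF that(2,3)] by simp
    show ?thesis unfolding B_def dyck_iff using build[OF that(1) b] build[OF that(2,3)] that(4,5) by simp
  qed
  have inA2: "True # (True # q1 @ False # q2) @ False # r \<in> A2"
    if "bal q1" "bal q2" "bal r" "returns r = k" "length q1 + length q2 + length r + 4 = 2 * Suc n" for q1 q2 r
  proof -
    have b: "bal (True # q1 @ False # q2)" using build[OF that(1,2)] by simp
    show ?thesis unfolding A2_def A_def dyck_iff using build[OF b that(3)] build[OF that(1,2)] that(4,5) by simp
  qed
  have bij: "bij_betw g B A2"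
  proof (rule bij_betw_byWitness[where f'=h])
    show "\<forall>a\<in>B. h (g a) = a"
    proof
      fix p assume "p \<in> B"
      then obtain q1 q2 r where "p = True # q1 @ False # (True # q2 @ False # r)" "bal q1" "bal q2" "bal r"
        using Bdec by blast
      then show "h (g p) = p" using gB hA by simp
    qed
  next
    show "\<forall>a\<in>A2. g (h a) = a"
    proof
      fix p assume "p \<in> A2"
      then obtain q1 q2 r where "p = True # (True # q1 @ False # q2) @ False # r" "bal q1" "bal q2" "bal r"
        using A2dec by blast
      then show "g (h p) = p" using gB hA by simp
    qed
  next
    show "g ` B \<subseteq> A2"
    proof
      fix x assume "x \<in> g ` B"
      then obtain p where pB: "p \<in> B" "x = g p" by blast
      then obtain q1 q2 r where "p = True # q1 @ False # (True # q2 @ False # r)" "bal q1" "bal q2" "bal r"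
        "returns r = k" "length q1 + length q2 + length r + 4 = 2 * Suc n"
        using Bdec by blast
      then show "x \<in> A2" using gB inA2 pB by simp
    qed
  next
    show "h ` A2 \<subseteq> B"
    proof
      fix x assume "x \<in> h ` A2"
      then obtain p where pA: "p \<in> A2" "x = h p" by blast
      then obtain q1 q2 r where "p = True # (True # q1 @ False # q2) @ False # r" "bal q1" "bal q2" "bal r"
        "returns r = k" "length q1 + length q2 + length r + 4 = 2 * Suc n"
        using A2dec by blast
      then show "x \<in> B" using hA inB pA by simp
    qed
  qed
  have cA2: "card A2 = card B" using bij_betw_same_card[OF bij] by simp
  show ?thesis using cA cA1 cA2 unfolding A_def B_def C_def by simp
qed

lemma dyck0: "dyck 0 = {[]}" by (auto simp: dyck_iff)

lemma returns_pos: "p \<in> dyck (Suc n) \<Longrightarrow> returns p \<noteq> 0"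
proof -
  assume "p \<in> dyck (Suc n)"
  then have p: "bal p" "p \<noteq> []" unfolding dyck_iff by auto
  obtain q r where "p = True # q @ False # r" "bal q" "bal r" using decomp_ex[OF p] by blast
  then show ?thesis using build by simp
qed

lemma dyck_count: "card {p\<in>dyck n. returns p = k} = D n k"
proof (induction n arbitrary: k)
  case 0
  have "{p\<in>dyck 0. returns p = k} = (if k = 0 then {[]} else {})" by (auto simp: dyck0)
  then show ?case by simp
next
  case (Suc n)
  note outer = Suc.IH
  show ?case
  proof (cases k)
    case 0
    have "\<forall>p\<in>dyck (Suc n). returns p \<noteq> 0" using returns_pos by blast
    then have "{p\<in>dyck (Suc n). returns p = k} = {}" using 0 by auto
    then have "card {p\<in>dyck (Suc n). returns p = k} = 0" by (simp only: card.empty)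
    then show ?thesis using 0 by simp
  next
    case (Suc k')
    have main: "\<forall>k'. k' + d \<ge> 2 * Suc n \<longrightarrow> card {p\<in>dyck (Suc n). returns p = Suc k'} = D (Suc n) (Suc k')" for d
    proof (induction d)
      case 0
      show ?case
      proof (intro allI impI)
        fix k' assume "k' + 0 \<ge> 2 * Suc n"
        then have "{p\<in>dyck (Suc n). returns p = Suc k'} = {}"
          using returns_le unfolding dyck_iff by (metis (mono_tags, lifting) Collect_empty_eq add_0_right not_less_eq_eq)
        moreover have "D (Suc n) (Suc k') = 0" using \<open>k' + 0 \<ge> 2 * Suc n\<close> by (intro D_big) simp
        ultimately show "card {p\<in>dyck (Suc n). returns p = Suc k'} = D (Suc n) (Suc k')" by (metis card.empty)
      qed
    next
      case (Suc d)
      show ?case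
      proof (intro allI impI)
        fix k' assume k': "k' + Suc d \<ge> 2 * Suc n"
        have "card {p\<in>dyck (Suc n). returns p = Suc (Suc k')} = D (Suc n) (Suc (Suc k'))"
          using Suc.IH k' by simp
        moreover have "card {p\<in>dyck n. returns p = k'} = D n k'" by (rule outer)
        ultimately show "card {p\<in>dyck (Suc n). returns p = Suc k'} = D (Suc n) (Suc k')"
          using dyck_rec[of n k'] D_two[of n k'] by (simp only:)
      qed
    qed
    show ?thesis using main[of "2 * Suc n"] Suc by simp
  qed
qed



definition av :: "nat list \<Rightarrow> bool" where
  "av x \<longleftrightarrow> \<not>(\<exists>i j l m. i<j \<and> j<l \<and> l<m \<and> m<length x \<and> x!i = x!j \<and> x!i < x!m \<and> x!m \<le> x!l)"

lemma subseq_idx: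
  assumes "subseq ys xs"
  shows "\<exists>f. (\<forall>a b. a < b \<longrightarrow> b < length ys \<longrightarrow> f a < f b) \<and> (\<forall>k<length ys. f k < length xs \<and> ys!k = xs!(f k))"
  using assms
proof (induction rule: list_emb.induct)
  case (list_emb_Nil ys) then show ?case by auto
next
  case (list_emb_Cons xs ys y)
  then obtain f where f: "\<forall>a b. a < b \<longrightarrow> b < length xs \<longrightarrow> f a < f b" "\<forall>k<length xs. f k < length ys \<and> xs!k = ys!(f k)" by blast
  show ?case by (rule exI[of _ "\<lambda>k. Suc (f k)"]) (use f in auto)
next
  case (list_emb_Cons2 x y xs ys)
  then obtain f where f: "\<forall>a b. a < b \<longrightarrow> b < length xs \<longrightarrow> f a < f b" "\<forall>k<length xs. f k < length ys \<and> xs!k = ys!(f k)" by blast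
  define g where "g k = (case k of 0 \<Rightarrow> 0 | Suc k' \<Rightarrow> Suc (f k'))" for k
  have "\<forall>a b. a < b \<longrightarrow> b < length (x#xs) \<longrightarrow> g a < g b"
  proof (intro allI impI)
    fix a b assume "a < b" "b < length (x#xs)"
    then show "g a < g b" using f(1) unfolding g_def by (cases a; cases b) auto
  qed
  moreover have "\<forall>k<length (x#xs). g k < length (y#ys) \<and> (x#xs)!k = (y#ys)!(g k)"
  proof (intro allI impI)
    fix k assume "k < length (x#xs)"
    then show "g k < length (y#ys) \<and> (x#xs)!k = (y#ys)!(g k)" using f(2) list_emb_Cons2.hyps(1) unfolding g_def by (cases k) auto
  qed
  ultimately show ?case by blast
qed

lemma idx_subseq:
  assumes "i<j" "j<l" "l<m" "m<length x"
  shows "subseq [x!i, x!j, x!l, x!m] x"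
proof -
  have "subseq [i,j,l,m] [0..<length x]"
    by (rule sorted_subset_imp_subseq) (use assms in auto)
  then have "subseq (map (nth x) [i,j,l,m]) (map (nth x) [0..<length x])" by (rule subseq_map)
  then show ?thesis by (simp add: map_nth)
qed

lemma all4: "(\<forall>i<(4::nat). P i) \<longleftrightarrow> P 0 \<and> P 1 \<and> P 2 \<and> P 3"
proof
  assume "\<forall>i<(4::nat). P i" then show "P 0 \<and> P 1 \<and> P 2 \<and> P 3" by auto
next
  assume a: "P 0 \<and> P 1 \<and> P 2 \<and> P 3"
  show "\<forall>i<(4::nat). P i"
  proof (intro allI impI)
    fix i :: nat assume "i < 4"
    then have "i = 0 \<or> i = 1 \<or> i = 2 \<or> i = 3" by auto
    then show "P i" using a by auto
  qed
qed

lemma allSuc: "(\<forall>i<Suc n. P i) \<longleftrightarrow> P n \<and> (\<forall>i<n. P i)"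
  by (auto simp: less_Suc_eq)

lemma contains_T0: "(\<exists>\<tau>\<in>{[0,0,1,1],[0,0,2,1]}. contains x \<tau>) \<longleftrightarrow> \<not> av x"
proof
  assume "\<exists>\<tau>\<in>{[0,0,1,1],[0,0,2,1]}. contains x \<tau>"
  then obtain \<tau> ys where t: "\<tau> \<in> {[0,0,1,1],[0,0,2,1]}" "subseq ys x" "order_iso ys \<tau>"
    unfolding contains_def by blast
  have l4: "length ys = 4" using t(1,3) unfolding order_iso_def by auto
  obtain f where f: "\<forall>a b. a < b \<longrightarrow> b < length ys \<longrightarrow> f a < f b" "\<forall>k<length ys. f k < length x \<and> ys!k = x!(f k)"
    using subseq_idx[OF t(2)] by blast
  have oi: "\<forall>i<4. \<forall>j<4. (ys ! i < ys ! j \<longleftrightarrow> \<tau> ! i < \<tau> ! j) \<and> (ys ! i = ys ! j \<longleftrightarrow> \<tau> ! i = \<tau> ! j)"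
    using t(3) l4 unfolding order_iso_def by simp
  have c1: "ys!0 = ys!1" using oi t(1) by auto
  have c2: "ys!0 < ys!3" using oi t(1) by auto
  have c3: "ys!3 \<le> ys!2" using oi t(1) by (auto simp: le_less)
  have "f 0 < f 1" "f 1 < f 2" "f 2 < f 3" "f 3 < length x" using f l4 by auto
  moreover have "ys!0 = x!(f 0)" "ys!1 = x!(f 1)" "ys!2 = x!(f 2)" "ys!3 = x!(f 3)" using f l4 by auto
  ultimately show "\<not> av x" unfolding av_def using c1 c2 c3 by metis
next
  assume "\<not> av x"
  then obtain i j l m where q: "i<j" "j<l" "l<m" "m<length x" "x!i = x!j" "x!i < x!m" "x!m \<le> x!l"
    unfolding av_def by blast
  have s: "subseq [x!i, x!j, x!l, x!m] x" using idx_subseq q by blast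
  show "\<exists>\<tau>\<in>{[0,0,1,1],[0,0,2,1]}. contains x \<tau>"
  proof (cases "x!m = x!l")
    case True
    have "order_iso [x!i, x!j, x!l, x!m] [0,0,1,1]"
      unfolding order_iso_def using q True by (simp add: allSuc)
    then show ?thesis using s unfolding contains_def by blast
  next
    case False
    have "order_iso [x!i, x!j, x!l, x!m] [0,0,2,1]"
      unfolding order_iso_def using q False by (simp add: allSuc)
    then show ?thesis using s unfolding contains_def by blast
  qed
qed

lemma avoids_T0: "avoids_all x {[0,0,1,1],[0,0,2,1]} \<longleftrightarrow> av x"
  using contains_T0[of x] unfolding avoids_all_def by blast

lemma asc_Nil [simp]: "asc [] = 0" by (simp add: asc_def)
lemma asc_single [simp]: "asc [a] = 0" by (simp add: asc_def)

lemma asc_snoc: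
  assumes "xs \<noteq> []"
  shows "asc (xs @ [v]) = asc xs + (if last xs < v then 1 else 0)"
proof -
  let ?A = "{j. Suc j < length xs \<and> xs!j < xs!Suc j}"
  have last: "last xs = xs ! (length xs - 1)" using assms by (simp add: last_conv_nth)
  have "{j. Suc j < length (xs@[v]) \<and> (xs@[v])!j < (xs@[v])!Suc j} =
        ?A \<union> (if last xs < v then {length xs - 1} else {})"
  proof (intro set_eqI iffI)
    fix j assume "j \<in> {j. Suc j < length (xs@[v]) \<and> (xs@[v])!j < (xs@[v])!Suc j}"
    then have j: "Suc j < Suc (length xs)" "(xs@[v])!j < (xs@[v])!Suc j" by auto
    show "j \<in> ?A \<union> (if last xs < v then {length xs - 1} else {})"
    proof (cases "Suc j < length xs")
      case True then show ?thesis using j by (auto simp: nth_append)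
    next
      case False
      then have "j = length xs - 1" using j by simp
      then show ?thesis using j last assms by (auto simp: nth_append)
    qed
  next
    fix j assume "j \<in> ?A \<union> (if last xs < v then {length xs - 1} else {})"
    then show "j \<in> {j. Suc j < length (xs@[v]) \<and> (xs@[v])!j < (xs@[v])!Suc j}"
      using last assms by (auto simp: nth_append split: if_splits)
  qed
  moreover have "finite ?A" by (rule finite_subset[of _ "{..<length xs}"]) auto
  moreover have "length xs - 1 \<notin> ?A" using assms by auto
  ultimately show ?thesis unfolding asc_def by (auto)
qed

lemma asc_le: "asc xs \<le> length xs - 1"
proof -
  have "{j. Suc j < length xs \<and> xs!j < xs!Suc j} \<subseteq> {..<length xs - 1}" by auto
  then show ?thesis unfolding asc_def by (metis card_lessThan card_mono finite_lessThan)
qed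

lemma ascent_seq_single: "ascent_seq [a] \<longleftrightarrow> a = 0"
  by (simp add: ascent_seq_def)

lemma ascent_seq_snoc:
  assumes "xs \<noteq> []"
  shows "ascent_seq (xs @ [v]) \<longleftrightarrow> ascent_seq xs \<and> v \<le> asc xs + 1"
proof -
  have a: "(\<forall>i. 0 < i \<and> i < length (xs@[v]) \<longrightarrow> (xs@[v]) ! i \<le> asc (take i (xs@[v])) + 1) \<longleftrightarrow>
        (\<forall>i. 0 < i \<and> i < length xs \<longrightarrow> xs ! i \<le> asc (take i xs) + 1) \<and> v \<le> asc xs + 1"
  proof
    assume h: "\<forall>i. 0 < i \<and> i < length (xs@[v]) \<longrightarrow> (xs@[v]) ! i \<le> asc (take i (xs@[v])) + 1"
    have "\<forall>i. 0 < i \<and> i < length xs \<longrightarrow> xs ! i \<le> asc (take i xs) + 1"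
    proof (intro allI impI)
      fix i assume "0 < i \<and> i < length xs"
      then show "xs ! i \<le> asc (take i xs) + 1" using h[rule_format, of i] by (simp add: nth_append)
    qed
    moreover have "v \<le> asc xs + 1" using h[rule_format, of "length xs"] assms by simp
    ultimately show "(\<forall>i. 0 < i \<and> i < length xs \<longrightarrow> xs ! i \<le> asc (take i xs) + 1) \<and> v \<le> asc xs + 1" by blast
  next
    assume h: "(\<forall>i. 0 < i \<and> i < length xs \<longrightarrow> xs ! i \<le> asc (take i xs) + 1) \<and> v \<le> asc xs + 1"
    show "\<forall>i. 0 < i \<and> i < length (xs@[v]) \<longrightarrow> (xs@[v]) ! i \<le> asc (take i (xs@[v])) + 1"
    proof (intro allI impI)
      fix i assume i: "0 < i \<and> i < length (xs@[v])"
      show "(xs@[v]) ! i \<le> asc (take i (xs@[v])) + 1"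
      proof (cases "i < length xs")
        case True then show ?thesis using h i by (simp add: nth_append)
      next
        case False then have "i = length xs" using i by simp
        then show ?thesis using h by simp
      qed
    qed
  qed
  have b: "(xs@[v]) ! 0 = xs ! 0" using assms by (simp add: nth_append)
  show ?thesis unfolding ascent_seq_def using a b assms by auto
qed

lemma ascent_seq_le_asc:
  "ascent_seq xs \<Longrightarrow> i < length xs \<Longrightarrow> xs ! i \<le> asc xs"
proof (induction xs arbitrary: i rule: rev_induct)
  case Nil then show ?case by simp
next
  case (snoc v ys)
  show ?case
  proof (cases "ys = []")
    case True then show ?thesis using snoc.prems by (simp add: ascent_seq_single)
  next
    case False
    have h: "ascent_seq ys" "v \<le> asc ys + 1" using snoc.prems(1) ascent_seq_snoc[OF False] by auto
    have ge: "asc (ys@[v]) \<ge> asc ys" using asc_snoc[OF False] by simp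
    show ?thesis
    proof (cases "i < length ys")
      case True
      then show ?thesis using snoc.IH[OF h(1) True] ge by (simp add: nth_append)
    next
      case False
      then have i: "i = length ys" using snoc.prems by simp
      show ?thesis
      proof (cases "v \<le> asc ys")
        case True then show ?thesis using i ge by simp
      next
        case F2: False
        have "last ys \<le> asc ys" using snoc.IH[OF h(1), of "length ys - 1"] \<open>ys \<noteq> []\<close>
          by (simp add: last_conv_nth)
        then have "last ys < v" using F2 by simp
        then show ?thesis using i asc_snoc[OF \<open>ys \<noteq> []\<close>] h(2) by simp
      qed
    qed
  qed
qed



definition forb :: "nat list \<Rightarrow> nat \<Rightarrow> bool" where
  "forb x v \<longleftrightarrow> (\<exists>i j l. i<j \<and> j<l \<and> l<length x \<and> x!i = x!j \<and> x!i < v \<and> v \<le> x!l)"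

definition ASQ :: "nat list \<Rightarrow> bool" where
  "ASQ x \<longleftrightarrow> ascent_seq x \<and> av x"

definition L :: "nat list \<Rightarrow> nat set" where
  "L x = {v. ASQ (x @ [v])}"

definition ell :: "nat list \<Rightarrow> nat" where
  "ell x = card (L x)"

lemma av_snoc: "av (xs @ [v]) \<longleftrightarrow> av xs \<and> \<not> forb xs v"
proof
  assume a: "av (xs @ [v])"
  have "av xs"
  proof (unfold av_def, rule notI)
    assume "\<exists>i j l m. i<j \<and> j<l \<and> l<m \<and> m<length xs \<and> xs!i = xs!j \<and> xs!i < xs!m \<and> xs!m \<le> xs!l"
    then obtain i j l m where q: "i<j" "j<l" "l<m" "m<length xs" "xs!i = xs!j" "xs!i < xs!m" "xs!m \<le> xs!l" by blast
    then have "(xs@[v])!i = (xs@[v])!j \<and> (xs@[v])!i < (xs@[v])!m \<and> (xs@[v])!m \<le> (xs@[v])!l"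
      by (simp add: nth_append)
    then have "\<exists>i j l m. i<j \<and> j<l \<and> l<m \<and> m<length (xs@[v]) \<and> (xs@[v])!i = (xs@[v])!j \<and> (xs@[v])!i < (xs@[v])!m \<and> (xs@[v])!m \<le> (xs@[v])!l"
      using q by (intro exI[of _ i] exI[of _ j] exI[of _ l] exI[of _ m]) simp
    then show False using a unfolding av_def by blast
  qed
  moreover have "\<not> forb xs v"
  proof
    assume "forb xs v"
    then obtain i j l where q: "i<j" "j<l" "l<length xs" "xs!i = xs!j" "xs!i < v" "v \<le> xs!l"
      unfolding forb_def by blast
    then have "(xs@[v])!i = (xs@[v])!j \<and> (xs@[v])!i < (xs@[v])!(length xs) \<and> (xs@[v])!(length xs) \<le> (xs@[v])!l"
      by (simp add: nth_append)
    then have "\<exists>i j l m. i<j \<and> j<l \<and> l<m \<and> m<length (xs@[v]) \<and> (xs@[v])!i = (xs@[v])!j \<and> (xs@[v])!i < (xs@[v])!m \<and> (xs@[v])!m \<le> (xs@[v])!l"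
      using q by (intro exI[of _ i] exI[of _ j] exI[of _ l] exI[of _ "length xs"]) simp
    then show False using a unfolding av_def by blast
  qed
  ultimately show "av xs \<and> \<not> forb xs v" by blast
next
  assume a: "av xs \<and> \<not> forb xs v"
  show "av (xs @ [v])"
  proof (unfold av_def, rule notI)
    assume "\<exists>i j l m. i<j \<and> j<l \<and> l<m \<and> m<length (xs@[v]) \<and> (xs@[v])!i = (xs@[v])!j \<and> (xs@[v])!i < (xs@[v])!m \<and> (xs@[v])!m \<le> (xs@[v])!l"
    then obtain i j l m where q: "i<j" "j<l" "l<m" "m<length (xs@[v])" "(xs@[v])!i = (xs@[v])!j"
      "(xs@[v])!i < (xs@[v])!m" "(xs@[v])!m \<le> (xs@[v])!l" by blast
    show False
    proof (cases "m < length xs")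
      case True
      then have "xs!i = xs!j \<and> xs!i < xs!m \<and> xs!m \<le> xs!l" using q by (simp add: nth_append)
      then show False using a q True unfolding av_def by blast
    next
      case False
      then have "m = length xs" using q by simp
      then have "xs!i = xs!j \<and> xs!i < v \<and> v \<le> xs!l" using q by (simp add: nth_append)
      then show False using a q \<open>m = length xs\<close> unfolding forb_def by blast
    qed
  qed
qed

lemma ASQ_snoc:
  assumes "xs \<noteq> []"
  shows "ASQ (xs @ [v]) \<longleftrightarrow> ASQ xs \<and> v \<le> asc xs + 1 \<and> \<not> forb xs v"
  using ascent_seq_snoc[OF assms] av_snoc unfolding ASQ_def by blast

lemma ASQ_nonempty: "ASQ x \<Longrightarrow> x \<noteq> []"
  unfolding ASQ_def ascent_seq_def by simp

lemma L_eq: "ASQ x \<Longrightarrow> L x = {v. v \<le> asc x + 1 \<and> \<not> forb x v}"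
  unfolding L_def using ASQ_snoc ASQ_nonempty by blast

lemma ASQ_le_asc: "ASQ x \<Longrightarrow> i < length x \<Longrightarrow> x!i \<le> asc x"
  unfolding ASQ_def using ascent_seq_le_asc by blast

lemma L_sub: "ASQ x \<Longrightarrow> L x \<subseteq> {..asc x + 1}"
  using L_eq by auto

lemma L_finite: "ASQ x \<Longrightarrow> finite (L x)"
  using L_sub finite_subset by blast

lemma not_forb0: "\<not> forb x 0" unfolding forb_def by simp

lemma not_forb_big: "ASQ x \<Longrightarrow> asc x < v \<Longrightarrow> \<not> forb x v"
  unfolding forb_def using ASQ_le_asc by (meson le_trans not_le)

lemma zero_in_L: "ASQ x \<Longrightarrow> 0 \<in> L x"
  using L_eq not_forb0 by auto

lemma top_in_L: "ASQ x \<Longrightarrow> asc x + 1 \<in> L x"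
  using L_eq not_forb_big by auto

lemma ell_ge2: "ASQ x \<Longrightarrow> ell x \<ge> 2"
proof -
  assume a: "ASQ x"
  have "{0, asc x + 1} \<subseteq> L x" using zero_in_L top_in_L a by auto
  then have "card {0, asc x + 1} \<le> card (L x)" using L_finite[OF a] by (rule card_mono[rotated])
  then show ?thesis unfolding ell_def by simp
qed

lemma ell_le: "ASQ x \<Longrightarrow> ell x \<le> length x + 1"
proof -
  assume a: "ASQ x"
  have "card (L x) \<le> card {..asc x + 1}" using L_sub[OF a] by (rule card_mono[rotated]) simp
  then have "ell x \<le> asc x + 2" unfolding ell_def by simp
  moreover have "asc x \<le> length x - 1" by (rule asc_le)
  moreover have "length x \<ge> 1" using ASQ_nonempty[OF a] by (cases x) auto
  ultimately show ?thesis by linarith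
qed

lemma L_snoc0:
  assumes a: "ASQ x"
  shows "L (x @ [0]) = L x"
proof -
  have ne: "x \<noteq> []" using ASQ_nonempty[OF a] .
  have a0: "ASQ (x @ [0])" using zero_in_L[OF a] unfolding L_def by simp
  have asc0: "asc (x @ [0]) = asc x" using asc_snoc[OF ne] by simp
  have f: "forb (x @ [0]) u \<longleftrightarrow> forb x u" for u
  proof
    assume "forb (x @ [0]) u"
    then obtain i j l where q: "i<j" "j<l" "l<length (x@[0])" "(x@[0])!i = (x@[0])!j" "(x@[0])!i < u" "u \<le> (x@[0])!l"
      unfolding forb_def by blast
    show "forb x u"
    proof (cases "l < length x")
      case True
      then have "x!i = x!j \<and> x!i < u \<and> u \<le> x!l" using q by (simp add: nth_append)
      then show ?thesis using q True unfolding forb_def by blast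
    next
      case False then have "l = length x" using q by simp
      then show ?thesis using q by (simp add: nth_append)
    qed
  next
    assume "forb x u"
    then obtain i j l where q: "i<j" "j<l" "l<length x" "x!i = x!j" "x!i < u" "u \<le> x!l"
      unfolding forb_def by blast
    then show "forb (x @ [0]) u" unfolding forb_def
      by (intro exI[of _ i] exI[of _ j] exI[of _ l]) (simp add: nth_append)
  qed
  show ?thesis using L_eq[OF a] L_eq[OF a0] asc0 f by simp
qed

lemma two_zeros_last:
  assumes a: "ASQ x" and z: "i0 < j0" "j0 < length x" "x!i0 = 0" "x!j0 = 0"
    and v: "v \<in> L x" "0 < v"
  shows "last x < v"
proof (rule ccontr)
  assume "\<not> last x < v"
  then have vl: "v \<le> last x" by simp
  have ne: "x \<noteq> []" using ASQ_nonempty[OF a] .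
  have lx: "last x = x ! (length x - 1)" using ne by (simp add: last_conv_nth)
  have "last x \<noteq> 0" using vl v by simp
  then have "j0 < length x - 1" using z lx by (metis Suc_pred' less_Suc_eq length_greater_0_conv ne)
  then have "forb x v" unfolding forb_def using z vl v lx
    by (intro exI[of _ i0] exI[of _ j0] exI[of _ "length x - 1"]) simp
  then show False using v L_eq[OF a] by simp
qed

lemma L_snoc_pos:
  assumes a: "ASQ x" and z: "i0 < j0" "j0 < length x" "x!i0 = 0" "x!j0 = 0"
    and v: "v \<in> L x" "0 < v"
  shows "L (x @ [v]) = insert 0 (insert (asc x + 2) {u\<in>L x. v < u})"
proof -
  have ne: "x \<noteq> []" using ASQ_nonempty[OF a] .
  have av: "ASQ (x @ [v])" using v unfolding L_def by simp
  have lt: "last x < v" using two_zeros_last[OF a z v] .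
  have ascv: "asc (x @ [v]) = asc x + 1" using asc_snoc[OF ne] lt by simp
  have vle: "v \<le> asc x + 1" using v L_eq[OF a] by simp
  have f: "forb (x @ [v]) u \<longleftrightarrow> forb x u \<or> (0 < u \<and> u \<le> v)" for u
  proof
    assume "forb (x @ [v]) u"
    then obtain i j l where q: "i<j" "j<l" "l<length (x@[v])" "(x@[v])!i = (x@[v])!j" "(x@[v])!i < u" "u \<le> (x@[v])!l"
      unfolding forb_def by blast
    show "forb x u \<or> (0 < u \<and> u \<le> v)"
    proof (cases "l < length x")
      case True
      then have "x!i = x!j \<and> x!i < u \<and> u \<le> x!l" using q by (simp add: nth_append)
      then have "forb x u" using q True unfolding forb_def by blast
      then show ?thesis by blast
    next
      case False then have "l = length x" using q by simp
      then show ?thesis using q by (simp add: nth_append)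
    qed
  next
    assume "forb x u \<or> (0 < u \<and> u \<le> v)"
    then show "forb (x @ [v]) u"
    proof
      assume "forb x u"
      then obtain i j l where q: "i<j" "j<l" "l<length x" "x!i = x!j" "x!i < u" "u \<le> x!l"
        unfolding forb_def by blast
      then show "forb (x @ [v]) u" unfolding forb_def
        by (intro exI[of _ i] exI[of _ j] exI[of _ l]) (simp add: nth_append)
    next
      assume "0 < u \<and> u \<le> v"
      then show "forb (x @ [v]) u" unfolding forb_def using z
        by (intro exI[of _ i0] exI[of _ j0] exI[of _ "length x"]) (simp add: nth_append)
    qed
  qed
  show ?thesis
  proof (intro set_eqI iffI)
    fix u assume "u \<in> L (x @ [v])"
    then have u: "u \<le> asc x + 2" "\<not> forb x u" "\<not> (0 < u \<and> u \<le> v)" using L_eq[OF av] ascv f by auto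
    show "u \<in> insert 0 (insert (asc x + 2) {u\<in>L x. v < u})"
    proof (cases "u = 0 \<or> u = asc x + 2")
      case True then show ?thesis by auto
    next
      case False
      then have "u \<le> asc x + 1" "v < u" using u by auto
      then show ?thesis using u L_eq[OF a] by auto
    qed
  next
    fix u assume u: "u \<in> insert 0 (insert (asc x + 2) {u\<in>L x. v < u})"
    have "u \<le> asc x + 2 \<and> \<not> forb x u \<and> \<not> (0 < u \<and> u \<le> v)"
      using u vle L_eq[OF a] not_forb0 not_forb_big[OF a, of "asc x + 2"] by auto
    then show "u \<in> L (x @ [v])" using L_eq[OF av] ascv f by auto
  qed
qed

lemma ell_snoc_pos:
  assumes a: "ASQ x" and z: "i0 < j0" "j0 < length x" "x!i0 = 0" "x!j0 = 0"
    and v: "v \<in> L x" "0 < v"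
  shows "ell (x @ [v]) = card {u\<in>L x. v < u} + 2"
proof -
  have fin: "finite {u\<in>L x. v < u}" using L_finite[OF a] by simp
  have "asc x + 2 \<notin> {u\<in>L x. v < u}" using L_sub[OF a] by auto
  moreover have "0 \<notin> insert (asc x + 2) {u\<in>L x. v < u}" by auto
  ultimately show ?thesis unfolding ell_def L_snoc_pos[OF assms] using fin by simp
qed



definition sh :: "nat list \<Rightarrow> nat list" where
  "sh y = 0 # map Suc y"

lemma sh_snoc: "sh (y @ [v]) = sh y @ [Suc v]" by (simp add: sh_def)
lemma sh_single: "sh [v] = [0, Suc v]" by (simp add: sh_def)
lemma sh_nth_Suc: "k < length y \<Longrightarrow> sh y ! Suc k = Suc (y ! k)" by (simp add: sh_def)
lemma sh_nth0: "sh y ! 0 = 0" by (simp add: sh_def)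
lemma sh_len: "length (sh y) = Suc (length y)" by (simp add: sh_def)
lemma last_sh: "y \<noteq> [] \<Longrightarrow> last (sh y) = Suc (last y)" by (simp add: sh_def last_map)

lemma asc_sh: "y \<noteq> [] \<Longrightarrow> asc (sh y) = asc y + 1"
proof (induction y rule: rev_induct)
  case Nil then show ?case by simp
next
  case (snoc v ys)
  show ?case
  proof (cases "ys = []")
    case True
    have "asc ([0] @ [Suc v]) = 1" using asc_snoc[of "[0]" "Suc v"] by simp
    then show ?thesis using True by (simp add: sh_def)
  next
    case False
    have "asc (sh ys @ [Suc v]) = asc (sh ys) + (if last (sh ys) < Suc v then 1 else 0)"
      by (rule asc_snoc) (simp add: sh_def)
    then show ?thesis using snoc.IH[OF False] last_sh[OF False] asc_snoc[OF False, of v] sh_snoc by simp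
  qed
qed

lemma ASQ_single: "ASQ [a] \<longleftrightarrow> a = 0"
  unfolding ASQ_def av_def using ascent_seq_single by auto

lemma forb_single: "\<not> forb [a] u" unfolding forb_def by auto

lemma forb_sh: "forb (sh y) u \<longleftrightarrow> 0 < u \<and> forb y (u - 1)"
proof
  assume "forb (sh y) u"
  then obtain i j l where q: "i<j" "j<l" "l<length (sh y)" "sh y!i = sh y!j" "sh y!i < u" "u \<le> sh y!l"
    unfolding forb_def by blast
  have "i \<noteq> 0"
  proof
    assume "i = 0"
    then have "sh y ! j = 0" using q sh_nth0 by simp
    moreover obtain j' where "j = Suc j'" using q by (cases j) auto
    ultimately show False using q sh_nth_Suc[of j' y] sh_len by simp
  qed
  then obtain i' where i: "i = Suc i'" by (cases i) auto
  obtain j' where j: "j = Suc j'" using q by (cases j) auto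
  obtain l' where l: "l = Suc l'" using q by (cases l) auto
  have lens: "i' < length y" "j' < length y" "l' < length y" using q i j l sh_len by auto
  have "y!i' = y!j'" "Suc (y!i') < u" "u \<le> Suc (y!l')"
    using q i j l sh_nth_Suc lens by auto
  then have "0 < u" "y!i' = y!j'" "y!i' < u - 1" "u - 1 \<le> y!l'" by auto
  then show "0 < u \<and> forb y (u - 1)" unfolding forb_def using q i j l lens by blast
next
  assume "0 < u \<and> forb y (u - 1)"
  then obtain i j l where q: "0 < u" "i<j" "j<l" "l<length y" "y!i = y!j" "y!i < u - 1" "u - 1 \<le> y!l"
    unfolding forb_def by blast
  have "sh y ! Suc i = sh y ! Suc j \<and> sh y ! Suc i < u \<and> u \<le> sh y ! Suc l"
    using q sh_nth_Suc[of i y] sh_nth_Suc[of j y] sh_nth_Suc[of l y] by auto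
  moreover have "Suc l < length (sh y)" using q sh_len by simp
  ultimately show "forb (sh y) u" unfolding forb_def using q
    by (intro exI[of _ "Suc i"] exI[of _ "Suc j"] exI[of _ "Suc l"]) simp
qed

lemma ASQ_sh: "y \<noteq> [] \<Longrightarrow> ASQ (sh y) \<longleftrightarrow> ASQ y"
proof (induction y rule: rev_induct)
  case Nil then show ?case by simp
next
  case (snoc v ys)
  show ?case
  proof (cases "ys = []")
    case True
    have "ASQ ([0] @ [Suc v]) \<longleftrightarrow> ASQ [0] \<and> Suc v \<le> asc [0] + 1 \<and> \<not> forb [0] (Suc v)"
      by (rule ASQ_snoc) simp
    then have "ASQ (sh [v]) \<longleftrightarrow> v = 0" using ASQ_single forb_single sh_single by simp
    then show ?thesis using True ASQ_single by simp
  next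
    case False
    have sne: "sh ys \<noteq> []" by (simp add: sh_def)
    have "ASQ (sh (ys @ [v])) \<longleftrightarrow> ASQ (sh ys) \<and> Suc v \<le> asc (sh ys) + 1 \<and> \<not> forb (sh ys) (Suc v)"
      unfolding sh_snoc by (rule ASQ_snoc[OF sne])
    also have "\<dots> \<longleftrightarrow> ASQ ys \<and> v \<le> asc ys + 1 \<and> \<not> forb ys v"
      using snoc.IH[OF False] asc_sh[OF False] forb_sh[of ys "Suc v"] by simp
    also have "\<dots> \<longleftrightarrow> ASQ (ys @ [v])" using ASQ_snoc[OF False] by simp
    finally show ?thesis .
  qed
qed

lemma L_sh: "ASQ y \<Longrightarrow> L (sh y) = insert 0 (Suc ` L y)"
proof -
  assume a: "ASQ y"
  have ne: "y \<noteq> []" using ASQ_nonempty[OF a] .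
  have a2: "ASQ (sh y)" using ASQ_sh[OF ne] a by simp
  show ?thesis
  proof (intro set_eqI iffI)
    fix u assume "u \<in> L (sh y)"
    then have u: "u \<le> asc y + 2" "\<not> (0 < u \<and> forb y (u - 1))" using L_eq[OF a2] asc_sh[OF ne] forb_sh by auto
    show "u \<in> insert 0 (Suc ` L y)"
    proof (cases u)
      case 0 then show ?thesis by simp
    next
      case (Suc w)
      then have "w \<in> L y" using u L_eq[OF a] by simp
      then show ?thesis using Suc by blast
    qed
  next
    fix u assume "u \<in> insert 0 (Suc ` L y)"
    then show "u \<in> L (sh y)"
    proof
      assume "u = 0" then show ?thesis using zero_in_L[OF a2] by simp
    next
      assume "u \<in> Suc ` L y"
      then obtain w where w: "w \<in> L y" "u = Suc w" by blast
      then show ?thesis using L_eq[OF a] L_eq[OF a2] asc_sh[OF ne] forb_sh by simp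
    qed
  qed
qed

lemma ell_sh: "ASQ y \<Longrightarrow> ell (sh y) = ell y + 1"
proof -
  assume a: "ASQ y"
  have "card (insert 0 (Suc ` L y)) = card (Suc ` L y) + 1"
    using L_finite[OF a] by simp
  also have "card (Suc ` L y) = card (L y)" by (rule card_image) simp
  finally show ?thesis unfolding ell_def L_sh[OF a] by simp
qed

lemma count_sh: "count_list (sh y) 0 = 1"
  by (simp add: sh_def count_list_0_iff)

definition SS :: "nat \<Rightarrow> nat list set" where
  "SS n = {x. length x = n \<and> ASQ x}"

lemma S_eq: "S n {[0,0,1,1],[0,0,2,1]} = SS n"
  unfolding S_def SS_def ASQ_def using avoids_T0 by auto

lemma SS1: "SS 1 = {[0]}"
proof (intro set_eqI iffI)
  fix x :: "nat list" assume "x \<in> SS 1"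
  then obtain a where "x = [a]" "ASQ [a]" unfolding SS_def by (auto simp: length_Suc_conv)
  then show "x \<in> {[0]}" using ASQ_single by simp
next
  fix x :: "nat list" assume "x \<in> {[0]}" then show "x \<in> SS 1" unfolding SS_def using ASQ_single by simp
qed

lemma ell0: "ell [0] = 2"
proof -
  have "L [0] = {0, 1}" using L_eq[of "[0]"] ASQ_single forb_single by auto
  then show ?thesis unfolding ell_def by simp
qed

lemma ASQ_head: "ASQ x \<Longrightarrow> x ! 0 = 0"
  unfolding ASQ_def ascent_seq_def by simp

lemma ASQ_count: "ASQ x \<Longrightarrow> count_list x 0 \<ge> 1"
proof -
  assume a: "ASQ x"
  then have "x \<noteq> []" using ASQ_nonempty by blast
  then have "0 \<in> set x" using ASQ_head[OF a] by (metis nth_mem length_greater_0_conv)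
  then show ?thesis using count_list_0_iff by (metis less_one not_le)
qed

lemma SS_finite: "finite (SS n)"
proof -
  have "SS n \<subseteq> {xs. set xs \<subseteq> {..n} \<and> length xs = n}"
  proof
    fix x assume x: "x \<in> SS n"
    then have a: "ASQ x" "length x = n" unfolding SS_def by auto
    have "\<forall>v\<in>set x. v \<le> n"
    proof
      fix v assume "v \<in> set x"
      then obtain i where "i < length x" "x ! i = v" by (metis in_set_conv_nth)
      then have "v \<le> asc x" using ASQ_le_asc[OF a(1)] by blast
      then show "v \<le> n" using asc_le[of x] a(2) by linarith
    qed
    then show "x \<in> {xs. set xs \<subseteq> {..n} \<and> length xs = n}" using a by auto
  qed
  moreover have "finite {xs. set xs \<subseteq> {..n} \<and> length xs = n}" by (rule finite_lists_length_eq) simp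
  ultimately show ?thesis by (rule finite_subset)
qed

lemma SS_zero1:
  assumes "n \<ge> 1"
  shows "{x\<in>SS (Suc n). count_list x 0 = 1} = sh ` SS n"
proof (intro set_eqI iffI)
  fix x assume "x \<in> {x\<in>SS (Suc n). count_list x 0 = 1}"
  then have x: "length x = Suc n" "ASQ x" "count_list x 0 = 1" unfolding SS_def by auto
  then obtain a x' where xa: "x = a # x'" by (cases x) auto
  have a0: "a = 0" using ASQ_head[OF x(2)] xa by simp
  have "count_list x' 0 = 0" using x(3) xa a0 by simp
  then have nz: "0 \<notin> set x'" using count_list_0_iff by metis
  define y where "y = map (\<lambda>v. v - 1) x'"
  have "map Suc y = x'" unfolding y_def using nz by (induction x') auto
  then have xs: "x = sh y" unfolding sh_def using xa a0 by simp
  have ly: "length y = n" using x(1) xa y_def by simp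
  then have "y \<noteq> []" using assms by auto
  then have "ASQ y" using ASQ_sh x(2) xs by simp
  then show "x \<in> sh ` SS n" using xs ly unfolding SS_def by blast
next
  fix x assume "x \<in> sh ` SS n"
  then obtain y where y: "y \<in> SS n" "x = sh y" by blast
  then have "length y = n" "ASQ y" unfolding SS_def by auto
  moreover then have "y \<noteq> []" using assms by auto
  ultimately show "x \<in> {x\<in>SS (Suc n). count_list x 0 = 1}"
    using y ASQ_sh count_sh sh_len unfolding SS_def by simp
qed

lemma SS_Suc_card:
  assumes "n \<ge> 1"
  shows "card {x\<in>SS (Suc n). P x} = (\<Sum>y\<in>SS n. card {v\<in>L y. P (y @ [v])})"
proof -
  have eq: "{x\<in>SS (Suc n). P x} = (\<Union>y\<in>SS n. (\<lambda>v. y @ [v]) ` {v\<in>L y. P (y @ [v])})"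
  proof (intro set_eqI iffI)
    fix x assume "x \<in> {x\<in>SS (Suc n). P x}"
    then have x: "length x = Suc n" "ASQ x" "P x" unfolding SS_def by auto
    then obtain y v where xv: "x = y @ [v]" by (metis length_Suc_conv_rev)
    have ly: "length y = n" using x(1) xv by simp
    then have yne: "y \<noteq> []" using assms by auto
    have "ASQ y" "v \<in> L y" using x(2) xv ASQ_snoc[OF yne] unfolding L_def by auto
    then show "x \<in> (\<Union>y\<in>SS n. (\<lambda>v. y @ [v]) ` {v\<in>L y. P (y @ [v])})"
      using ly x(3) xv unfolding SS_def by blast
  next
    fix x assume "x \<in> (\<Union>y\<in>SS n. (\<lambda>v. y @ [v]) ` {v\<in>L y. P (y @ [v])})"
    then obtain y v where "y \<in> SS n" "v \<in> L y" "P (y @ [v])" "x = y @ [v]" by blast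
    then show "x \<in> {x\<in>SS (Suc n). P x}" unfolding SS_def L_def by auto
  qed
  have fin: "\<forall>y\<in>SS n. finite ((\<lambda>v. y @ [v]) ` {v\<in>L y. P (y @ [v])})"
    using L_finite unfolding SS_def by auto
  have disj: "\<forall>y\<in>SS n. \<forall>y'\<in>SS n. y \<noteq> y' \<longrightarrow>
      ((\<lambda>v. y @ [v]) ` {v\<in>L y. P (y @ [v])}) \<inter> ((\<lambda>v. y' @ [v]) ` {v\<in>L y'. P (y' @ [v])}) = {}"
    by auto
  have "card {x\<in>SS (Suc n). P x} = (\<Sum>y\<in>SS n. card ((\<lambda>v. y @ [v]) ` {v\<in>L y. P (y @ [v])}))"
    unfolding eq by (rule card_UN_disjoint[OF SS_finite fin disj])
  also have "\<dots> = (\<Sum>y\<in>SS n. card {v\<in>L y. P (y @ [v])})"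
    by (rule sum.cong) (auto intro: card_image simp: inj_on_def)
  finally show ?thesis .
qed

lemma card_above:
  "finite (B::nat set) \<Longrightarrow> card {v\<in>B. m \<le> card {u\<in>B. v < u}} = card B - (m::nat)"
proof (induction B rule: finite_linorder_min_induct)
  case empty then show ?case by simp
next
  case (insert b A)
  have fA: "finite A" by fact
  have bmin: "\<forall>a\<in>A. b < a" by fact
  have bA: "b \<notin> A" using bmin by auto
  have c1: "\<And>v. v \<in> A \<Longrightarrow> {u\<in>insert b A. v < u} = {u\<in>A. v < u}" using bmin by auto
  have c2: "{u\<in>insert b A. b < u} = A" using bmin by auto
  have "{v\<in>insert b A. m \<le> card {u\<in>insert b A. v < u}} =
        (if m \<le> card A then insert b {v\<in>A. m \<le> card {u\<in>A. v < u}} else {v\<in>A. m \<le> card {u\<in>A. v < u}})"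
    using c1 c2 by auto
  moreover have "b \<notin> {v\<in>A. m \<le> card {u\<in>A. v < u}}" using bA by simp
  ultimately have "card {v\<in>insert b A. m \<le> card {u\<in>insert b A. v < u}} =
     (if m \<le> card A then Suc (card A - m) else card A - m)"
    using insert.IH fA by simp
  then show ?case using fA bA by (simp add: Suc_diff_le)
qed

lemma card_filter_sum: "finite A \<Longrightarrow> card {a\<in>A. P a} = (\<Sum>a\<in>A. if P a then 1 else 0)"
  by (simp add: sum.inter_filter[symmetric])

lemma sum_card_swap:
  assumes "finite X" "\<forall>x\<in>X. f x < c + N"
  shows "(\<Sum>x\<in>X. f x + 1 - c) = (\<Sum>i<N. card {x\<in>X. c + i \<le> f x})"
proof -
  have e: "f x + 1 - c = card {i\<in>{..<N}. c + i \<le> f x}" if "x \<in> X" for x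
  proof -
    have "{i\<in>{..<N}. c + i \<le> f x} = {..<f x + 1 - c}" using assms(2) that by auto
    then show ?thesis by simp
  qed
  have "(\<Sum>x\<in>X. f x + 1 - c) = (\<Sum>x\<in>X. \<Sum>i<N. if c + i \<le> f x then 1 else 0)"
    using e card_filter_sum[of "{..<N}"] by (intro sum.cong) auto
  also have "\<dots> = (\<Sum>i<N. \<Sum>x\<in>X. if c + i \<le> f x then 1 else 0)" by (rule sum.swap)
  also have "\<dots> = (\<Sum>i<N. card {x\<in>X. c + i \<le> f x})"
    using card_filter_sum[OF assms(1)] by simp
  finally show ?thesis .
qed

lemma card_partition:
  assumes "finite A" "finite K" "\<forall>y\<in>A. g y \<in> K"
  shows "card {y\<in>A. P y} = (\<Sum>k\<in>K. card {y\<in>A. P y \<and> g y = k})"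
proof -
  have "{y\<in>A. P y} = (\<Union>k\<in>K. {y\<in>A. P y \<and> g y = k})" using assms(3) by auto
  then have "card {y\<in>A. P y} = card (\<Union>k\<in>K. {y\<in>A. P y \<and> g y = k})" by simp
  also have "\<dots> = (\<Sum>k\<in>K. card {y\<in>A. P y \<and> g y = k})"
    by (rule card_UN_disjoint) (use assms in auto)
  finally show ?thesis .
qed



lemma D1: "D 1 (Suc j) = (if j = 0 then 1 else 0)"
  by (simp add: D.simps(2))

lemma D_Suc_Suc: "D (Suc n) (Suc k) = (\<Sum>i<Suc n. D n (k+i))"
  by (simp add: D.simps(2))

lemma two_zeros:
  "count_list y (0::nat) \<ge> 2 \<Longrightarrow> \<exists>i0 j0. i0 < j0 \<and> j0 < length y \<and> y!i0 = 0 \<and> y!j0 = 0"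
proof (induction y)
  case Nil then show ?case by simp
next
  case (Cons a y)
  show ?case
  proof (cases "a = 0")
    case True
    then have "count_list y 0 \<ge> 1" using Cons.prems by simp
    then have "0 \<in> set y" using count_list_0_iff by (metis not_one_le_zero)
    then obtain j where "j < length y" "y!j = 0" by (metis in_set_conv_nth)
    then show ?thesis using True by (intro exI[of _ 0] exI[of _ "Suc j"]) simp
  next
    case False
    then have "count_list y 0 \<ge> 2" using Cons.prems by simp
    then obtain i j where "i < j" "j < length y" "y!i = 0" "y!j = 0" using Cons.IH by blast
    then show ?thesis by (intro exI[of _ "Suc i"] exI[of _ "Suc j"]) simp
  qed
qed

lemma per_y:
  assumes y: "ASQ y" and k: "k \<ge> 2" and c: "c \<ge> 2"
  shows "card {v\<in>L y. count_list (y @ [v]) 0 = k \<and> c \<le> ell (y @ [v])} =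
    (if count_list y 0 + 1 = k \<and> c \<le> ell y then 1 else 0) + (if count_list y 0 = k then ell y + 1 - c else 0)"
proof -
  let ?P = "\<lambda>v. count_list (y @ [v]) 0 = k \<and> c \<le> ell (y @ [v])"
  have fin: "finite (L y)" using L_finite[OF y] .
  have split: "{v\<in>L y. ?P v} = {v\<in>L y. v = 0 \<and> ?P v} \<union> {v\<in>L y. 0 < v \<and> ?P v}" by auto
  have c1: "card {v\<in>L y. v = 0 \<and> ?P v} = (if count_list y 0 + 1 = k \<and> c \<le> ell y then 1 else 0)"
  proof -
    have "{v\<in>L y. v = 0 \<and> ?P v} = (if count_list y 0 + 1 = k \<and> c \<le> ell y then {0} else {})"
      using zero_in_L[OF y] L_snoc0[OF y] unfolding ell_def by auto
    then show ?thesis by simp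
  qed
  have c2: "card {v\<in>L y. 0 < v \<and> ?P v} = (if count_list y 0 = k then ell y + 1 - c else 0)"
  proof (cases "count_list y 0 = k")
    case False
    then have "{v\<in>L y. 0 < v \<and> ?P v} = {}" by auto
    then show ?thesis using False by simp
  next
    case True
    then obtain i0 j0 where z: "i0 < j0" "j0 < length y" "y!i0 = 0" "y!j0 = 0"
      using two_zeros k by metis
    define B where "B = L y - {0}"
    have fB: "finite B" using fin B_def by simp
    have cB: "card B = ell y - 1" unfolding B_def ell_def using zero_in_L[OF y] fin by simp
    have "{v\<in>L y. 0 < v \<and> ?P v} = {v\<in>B. c - 2 \<le> card {u\<in>B. v < u}}"
    proof (intro set_eqI iffI)
      fix v assume v: "v \<in> {v\<in>L y. 0 < v \<and> ?P v}"
      then have vv: "v \<in> L y" "0 < v" by auto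
      have e: "ell (y @ [v]) = card {u\<in>L y. v < u} + 2" by (rule ell_snoc_pos[OF y z vv])
      have "{u\<in>L y. v < u} = {u\<in>B. v < u}" unfolding B_def using vv by auto
      moreover have "c \<le> ell (y @ [v])" using v by simp
      ultimately have "c \<le> card {u\<in>B. v < u} + 2" using e by simp
      moreover have "v \<in> B" unfolding B_def using vv by simp
      ultimately show "v \<in> {v\<in>B. c - 2 \<le> card {u\<in>B. v < u}}" by simp
    next
      fix v assume v: "v \<in> {v\<in>B. c - 2 \<le> card {u\<in>B. v < u}}"
      then have vv: "v \<in> L y" "0 < v" unfolding B_def by auto
      have e: "ell (y @ [v]) = card {u\<in>L y. v < u} + 2" by (rule ell_snoc_pos[OF y z vv])
      have ee: "{u\<in>L y. v < u} = {u\<in>B. v < u}" unfolding B_def using vv by auto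
      have "c - 2 \<le> card {u\<in>B. v < u}" using v by simp
      then have "c \<le> ell (y @ [v])" using e ee c by simp
      moreover have "count_list (y @ [v]) 0 = k" using vv True by simp
      ultimately show "v \<in> {v\<in>L y. 0 < v \<and> ?P v}" using vv by simp
    qed
    then have "card {v\<in>L y. 0 < v \<and> ?P v} = card B - (c - 2)" using card_above[OF fB] by simp
    then show ?thesis using True cB ell_ge2[OF y] c by simp
  qed
  have "card {v\<in>L y. ?P v} = card {v\<in>L y. v = 0 \<and> ?P v} + card {v\<in>L y. 0 < v \<and> ?P v}"
    unfolding split by (rule card_Un_disjoint) (use fin in auto)
  then show ?thesis using c1 c2 by simp
qed

lemma main_count:
  assumes "1 \<le> n"
  shows "\<forall>k c. 1 \<le> k \<longrightarrow> 2 \<le> c \<longrightarrow> card {x\<in>SS n. count_list x 0 = k \<and> c \<le> ell x} = D n (k + c - 2)"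
  using assms
proof (induction n rule: nat_induct_at_least)
  case base
  show ?case
  proof (intro allI impI)
    fix k c :: nat assume kc: "1 \<le> k" "2 \<le> c"
    have "{x\<in>SS 1. count_list x 0 = k \<and> c \<le> ell x} = (if count_list [0::nat] 0 = k \<and> c \<le> ell [0] then {[0]} else {})"
      unfolding SS1 by auto
    then have "{x\<in>SS 1. count_list x 0 = k \<and> c \<le> ell x} = (if k = 1 \<and> c \<le> 2 then {[0]} else {})"
      using ell0 by simp
    moreover have "k + c - 2 = Suc (k + c - 3)" using kc by simp
    ultimately show "card {x\<in>SS 1. count_list x 0 = k \<and> c \<le> ell x} = D 1 (k + c - 2)"
      using D1 kc by auto
  qed
next
  case (Suc n)
  note IH = Suc.IH
  have n1: "1 \<le> n" by fact
  show ?case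
  proof (intro allI impI)
    fix k c :: nat assume kc: "1 \<le> k" "2 \<le> c"
    show "card {x\<in>SS (Suc n). count_list x 0 = k \<and> c \<le> ell x} = D (Suc n) (k + c - 2)"
    proof (cases "k = 1")
      case True
      define c' where "c' = max 2 (c - 1)"
      have c'2: "2 \<le> c'" unfolding c'_def by simp
      have "{x\<in>SS (Suc n). count_list x 0 = k \<and> c \<le> ell x} = sh ` {y\<in>SS n. c' \<le> ell y}"
      proof -
        have "{x\<in>SS (Suc n). count_list x 0 = k \<and> c \<le> ell x} = {x\<in>{x\<in>SS (Suc n). count_list x 0 = 1}. c \<le> ell x}"
          using True by auto
        also have "\<dots> = {x\<in>sh ` SS n. c \<le> ell x}" using SS_zero1[OF n1] by simp
        also have "\<dots> = sh ` {y\<in>SS n. c \<le> ell (sh y)}" by auto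
        also have "\<dots> = sh ` {y\<in>SS n. c' \<le> ell y}"
        proof -
          have "\<And>y. y \<in> SS n \<Longrightarrow> c \<le> ell (sh y) \<longleftrightarrow> c' \<le> ell y"
            using ell_sh ell_ge2 unfolding SS_def c'_def by fastforce
          then show ?thesis by auto
        qed
        finally show ?thesis .
      qed
      moreover have "inj sh" unfolding sh_def inj_def by (simp add: inj_map_eq_map)
      ultimately have "card {x\<in>SS (Suc n). count_list x 0 = k \<and> c \<le> ell x} = card {y\<in>SS n. c' \<le> ell y}"
        by (simp add: card_image inj_on_subset[of sh UNIV])
      also have "\<dots> = (\<Sum>kk\<in>Suc ` {..<n}. card {y\<in>SS n. c' \<le> ell y \<and> count_list y 0 = kk})"
      proof (rule card_partition[OF SS_finite])
        show "finite (Suc ` {..<n})" by simp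
        show "\<forall>y\<in>SS n. count_list y 0 \<in> Suc ` {..<n}"
        proof
          fix y assume "y \<in> SS n"
          then have "1 \<le> count_list y 0" "count_list y 0 \<le> n"
            using ASQ_count count_le_length[of y 0] unfolding SS_def by auto
          then show "count_list y 0 \<in> Suc ` {..<n}" by (auto intro!: image_eqI[where x="count_list y 0 - 1"])
        qed
      qed
      also have "\<dots> = (\<Sum>i<n. card {y\<in>SS n. c' \<le> ell y \<and> count_list y 0 = Suc i})"
        by (subst sum.reindex) auto
      also have "\<dots> = (\<Sum>i<n. D n (Suc i + c' - 2))"
      proof (rule sum.cong)
        fix i assume "i \<in> {..<n}"
        have "card {y\<in>SS n. count_list y 0 = Suc i \<and> c' \<le> ell y} = D n (Suc i + c' - 2)"
          using IH c'2 by simp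
        moreover have "{y\<in>SS n. c' \<le> ell y \<and> count_list y 0 = Suc i} = {y\<in>SS n. count_list y 0 = Suc i \<and> c' \<le> ell y}" by auto
        ultimately show "card {y\<in>SS n. c' \<le> ell y \<and> count_list y 0 = Suc i} = D n (Suc i + c' - 2)" by simp
      qed simp
      also have "\<dots> = D (Suc n) (k + c - 2)"
      proof (cases "c = 2")
        case True
        then have "c' = 2" unfolding c'_def by simp
        obtain n' where n': "n = Suc n'" using n1 by (cases n) auto
        have "D (Suc n) (k + c - 2) = (\<Sum>i<Suc n. D n (0+i))" using True \<open>k = 1\<close> D_Suc_Suc[of n 0] by simp
        also have "\<dots> = D n 0 + (\<Sum>i<n. D n (Suc i))" by (subst sum.lessThan_Suc_shift) simp
        also have "D n 0 = 0" using n' by simp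
        finally show ?thesis using \<open>c' = 2\<close> by simp
      next
        case False
        then have cc: "c' = c - 1" "c \<ge> 3" unfolding c'_def using kc by auto
        have kc2: "k + c - 2 = Suc (c - 2)" using cc \<open>k = 1\<close> by simp
        have "D (Suc n) (k + c - 2) = (\<Sum>i<Suc n. D n (c - 2 + i))"
          unfolding kc2 by (rule D_Suc_Suc)
        also have "\<dots> = (\<Sum>i<n. D n (c - 2 + i)) + D n (c - 2 + n)" by simp
        also have "D n (c - 2 + n) = 0" using cc by (intro D_big) simp
        finally have "D (Suc n) (k + c - 2) = (\<Sum>i<n. D n (c - 2 + i))" by simp
        moreover have "\<And>i. Suc i + c' - 2 = c - 2 + i" using cc by simp
        ultimately show ?thesis by simp
      qed
      finally show ?thesis .
    next
      case False
      then have k2: "k \<ge> 2" using kc by simp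
      define N where "N = n + 2"
      have "card {x\<in>SS (Suc n). count_list x 0 = k \<and> c \<le> ell x} =
          (\<Sum>y\<in>SS n. card {v\<in>L y. count_list (y @ [v]) 0 = k \<and> c \<le> ell (y @ [v])})"
        by (rule SS_Suc_card[OF n1])
      also have "\<dots> = (\<Sum>y\<in>SS n. (if count_list y 0 + 1 = k \<and> c \<le> ell y then 1 else 0)
          + (if count_list y 0 = k then ell y + 1 - c else 0))"
        by (rule sum.cong) (use per_y k2 kc in \<open>auto simp: SS_def\<close>)
      also have "\<dots> = (\<Sum>y\<in>SS n. (if count_list y 0 + 1 = k \<and> c \<le> ell y then 1 else 0))
          + (\<Sum>y\<in>SS n. (if count_list y 0 = k then ell y + 1 - c else 0))"
        by (rule sum.distrib)
      also have "(\<Sum>y\<in>SS n. (if count_list y 0 + 1 = k \<and> c \<le> ell y then 1 else 0))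
          = card {y\<in>SS n. count_list y 0 = k - 1 \<and> c \<le> ell y}"
      proof -
        have "{y\<in>SS n. count_list y 0 = k - 1 \<and> c \<le> ell y} = {y\<in>SS n. count_list y 0 + 1 = k \<and> c \<le> ell y}"
          using k2 by auto
        then show ?thesis using card_filter_sum[OF SS_finite] by simp
      qed
      also have "card {y\<in>SS n. count_list y 0 = k - 1 \<and> c \<le> ell y} = D n (k + c - 3)"
      proof -
        have "card {y\<in>SS n. count_list y 0 = k - 1 \<and> c \<le> ell y} = D n (k - 1 + c - 2)"
          using IH k2 kc by simp
        moreover have "k - 1 + c - 2 = k + c - 3" using k2 by simp
        ultimately show ?thesis by (simp only:)
      qed
      also have "(\<Sum>y\<in>SS n. (if count_list y 0 = k then ell y + 1 - c else 0))
          = (\<Sum>y\<in>{y\<in>SS n. count_list y 0 = k}. ell y + 1 - c)"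
        by (rule sum.inter_filter[OF SS_finite, symmetric])
      also have "\<dots> = (\<Sum>i<N. card {y\<in>{y\<in>SS n. count_list y 0 = k}. c + i \<le> ell y})"
      proof (rule sum_card_swap)
        show "finite {y\<in>SS n. count_list y 0 = k}" using SS_finite by simp
        show "\<forall>x\<in>{y\<in>SS n. count_list y 0 = k}. ell x < c + N"
          using ell_le kc unfolding SS_def N_def by fastforce
      qed
      also have "\<dots> = (\<Sum>i<N. D n (k + c - 3 + Suc i))"
      proof (rule sum.cong)
        fix i assume "i \<in> {..<N}"
        have "card {y\<in>SS n. count_list y 0 = k \<and> c + i \<le> ell y} = D n (k + (c + i) - 2)"
          using IH kc by simp
        moreover have "{y\<in>{y\<in>SS n. count_list y 0 = k}. c + i \<le> ell y} = {y\<in>SS n. count_list y 0 = k \<and> c + i \<le> ell y}" by auto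
        moreover have "k + (c + i) - 2 = k + c - 3 + Suc i" using k2 kc by simp
        ultimately show "card {y\<in>{y\<in>SS n. count_list y 0 = k}. c + i \<le> ell y} = D n (k + c - 3 + Suc i)" by simp
      qed simp
      also have "D n (k + c - 3) + (\<Sum>i<N. D n (k + c - 3 + Suc i)) = (\<Sum>i<Suc N. D n (k + c - 3 + i))"
        by (subst sum.lessThan_Suc_shift) simp
      also have "\<dots> = D (Suc n) (Suc (k + c - 3))" by (rule D_sum_big) (simp add: N_def)
      also have "Suc (k + c - 3) = k + c - 2" using k2 kc by simp
      finally show ?thesis .
    qed
  qed
qed


lemma glue:
  assumes fA: "finite A" and fB: "finite B" and c: "\<forall>k. card {a\<in>A. f a = k} = card {b\<in>B. g b = (k::nat)}"
  shows "\<exists>h. bij_betw h A B \<and> (\<forall>a\<in>A. g (h a) = f a)"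
proof -
  have "\<forall>k. \<exists>hk. bij_betw hk {a\<in>A. f a = k} {b\<in>B. g b = k}"
  proof
    fix k
    show "\<exists>hk. bij_betw hk {a\<in>A. f a = k} {b\<in>B. g b = k}"
      by (rule finite_same_card_bij) (use fA fB c in auto)
  qed
  then obtain H where H: "\<And>k. bij_betw (H k) {a\<in>A. f a = k} {b\<in>B. g b = k}" by metis
  define h where "h a = H (f a) a" for a
  have img: "h a \<in> B \<and> g (h a) = f a" if "a \<in> A" for a
  proof -
    have "a \<in> {a'\<in>A. f a' = f a}" using that by simp
    then have "H (f a) a \<in> {b\<in>B. g b = f a}" using bij_betw_apply[OF H] by blast
    then show ?thesis unfolding h_def by simp
  qed
  have inj: "inj_on h A"
  proof (rule inj_onI)
    fix a a' assume a: "a \<in> A" "a' \<in> A" "h a = h a'"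
    then have fa: "f a = f a'" using img by metis
    have "inj_on (H (f a)) {x\<in>A. f x = f a}" using H bij_betw_imp_inj_on by blast
    moreover have "a \<in> {x\<in>A. f x = f a}" "a' \<in> {x\<in>A. f x = f a}" using a fa by auto
    moreover have "H (f a) a = H (f a) a'" using a(3) fa unfolding h_def by simp
    ultimately show "a = a'" by (meson inj_onD)
  qed
  have "h ` A = B"
  proof
    show "h ` A \<subseteq> B" using img by auto
  next
    show "B \<subseteq> h ` A"
    proof
      fix b assume b: "b \<in> B"
      have "H (g b) ` {a\<in>A. f a = g b} = {b'\<in>B. g b' = g b}" using H bij_betw_imp_surj_on by blast
      then have "b \<in> H (g b) ` {a\<in>A. f a = g b}" using b by simp
      then obtain a where a: "a \<in> {a\<in>A. f a = g b}" "b = H (g b) a" by (rule imageE)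
      then have "b = h a" "a \<in> A" unfolding h_def by auto
      then show "b \<in> h ` A" by (rule image_eqI)
    qed
  qed
  then show ?thesis using inj img unfolding bij_betw_def by blast
qed

theorem mainTheorem7:
  fixes n :: nat
  assumes "n \<ge> 1"
  shows "(\<exists>f. bij_betw f (S n {[0,0,1,1], [0,0,2,1]}) (dyck n) \<and>
            (\<forall>xs\<in>S n {[0,0,1,1], [0,0,2,1]}. returns (f xs) = count_list xs 0))
         \<and> (\<forall>k\<ge>1. card {xs\<in>S n {[0,0,1,1], [0,0,2,1]}. count_list xs 0 = k}
                   = card {p\<in>dyck n. returns p = k})
         \<and> card (S n {[0,0,1,1], [0,0,2,1]}) = catalan n"
proof -
  have A: "S n {[0,0,1,1],[0,0,2,1]} = SS n" by (rule S_eq)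
  have fib: "\<forall>k. card {x\<in>SS n. count_list x 0 = k} = card {p\<in>dyck n. returns p = k}"
  proof
    fix k
    show "card {x\<in>SS n. count_list x 0 = k} = card {p\<in>dyck n. returns p = k}"
    proof (cases "k = 0")
      case True
      have "{x\<in>SS n. count_list x 0 = k} = {}" using ASQ_count True unfolding SS_def by fastforce
      moreover have "card {p\<in>dyck n. returns p = k} = 0" using dyck_count[of n k] True assms by (cases n) auto
      ultimately show ?thesis by (metis card.empty)
    next
      case False
      have "{x\<in>SS n. count_list x 0 = k} = {x\<in>SS n. count_list x 0 = k \<and> 2 \<le> ell x}"
        using ell_ge2 unfolding SS_def by auto
      then have "card {x\<in>SS n. count_list x 0 = k} = D n (k + 2 - 2)" using main_count[OF assms] False by simp
      then show ?thesis using dyck_count[of n k] by simp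
    qed
  qed
  obtain h where h: "bij_betw h (SS n) (dyck n)" "\<forall>a\<in>SS n. returns (h a) = count_list a 0"
    using glue[OF SS_finite dyck_finite fib] by blast
  have cardS: "card (SS n) = catalan n"
  proof -
    have "card {y\<in>SS n. True} = (\<Sum>k\<in>{..<Suc n}. card {y\<in>SS n. True \<and> count_list y 0 = k})"
    proof (rule card_partition[OF SS_finite])
      show "finite {..<Suc n}" by simp
      show "\<forall>y\<in>SS n. count_list y 0 \<in> {..<Suc n}"
        using count_le_length unfolding SS_def by (metis (mono_tags, lifting) lessThan_iff less_Suc_eq_le mem_Collect_eq)
    qed
    also have "\<dots> = (\<Sum>k<Suc n. D n (0 + k))"
    proof (rule sum.cong)
      fix k assume "k \<in> {..<Suc n}"
      have "card {y\<in>SS n. True \<and> count_list y 0 = k} = card {p\<in>dyck n. returns p = k}" using fib by simp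
      then show "card {y\<in>SS n. True \<and> count_list y 0 = k} = D n (0 + k)" using dyck_count by simp
    qed simp
    also have "\<dots> = D (Suc n) (Suc 0)" by (rule D_sum_big) simp
    also have "\<dots> = catalan n" using D_catalan by simp
    finally show ?thesis by simp
  qed
  show ?thesis using h fib cardS A by auto
qed

end
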